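(* Let $(S,\mathit{Act},P,\mu)$ be an MDP, $\pi$ a stationary policy, $I\subseteq S$ a measurable set that is absorbing under $\pi$ with $\mu(I)=1$, and $A,B\subseteq S$ measurable. Let $0<\gamma<1$ and suppose there is a constant $\bar H<\infty$ with $\mathbb{E}_\pi[\mathrm{step}^{(A,B)}\mid S_0=s]\le\bar H$ for all $s\in I$. Let the reward be $r(s,a,s')=r_B\mathbf 1_{\{s\in B\}}-r_{A\setminus B}\mathbf 1_{\{s\in A\setminus B\}}$ with $r_B,r_{A\setminus B}>0$ and $\frac{r_B}{r_{A\setminus B}}\ge\frac{1}{1-\gamma}\left(\frac{1}{\gamma^{\bar H+1}}-1\right)$, and the state-dependent discount $\Gamma(s)=\gamma$ if $s\in A\cup B$, $\Gamma(s)=1$ otherwise. Then for all $s\in I$, $$V^\pi(s)\ge -\,r_{A\setminus B}\,\frac{1-\gamma^{\bar H}}{1-\gamma}.$$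
   Context: State and action spaces are finite/countable or Borel subsets of Euclidean space; $P$ is a stochastic kernel on $S$ given $S\times\mathit{Act}$ and $\mu$ an initial distribution. A stationary policy $\pi$ is a stochastic kernel on $\mathit{Act}$ given $S$; $\Pr_\pi(\cdot\mid S_0=s)$, $\mathbb{E}_\pi[\cdot\mid S_0=s]$ refer to the process with $S_0=s$, $A_t\sim\pi(\cdot\mid S_t)$, $S_{t+1}\sim P(\cdot\mid S_t,A_t)$. A measurable set $X$ is absorbing under $\pi$ if $\Pr_\pi(S_1\in X\mid S_0=s)=1$ for all $s\in X$. For a run $\rho=(s_0,s_1,\dots)$: $\mathrm{step}^{(A,B)}(\rho):=|\{i:0\le i<\min\{j\ge0:s_j\in B\},\ s_i\in A\}|$ (with $\min\emptyset=\infty$), and $N^U_t(\rho):=|\{i:0\le i<t,\ s_i\in U\}|$. The value function with the state-dependent discount $\Gamma$ is $V^\pi(s)=\mathbb{E}_\pi\big[\sum_{t\ge0}\gamma^{N_t^{A\cup B}}r(S_t,A_t,S_{t+1})\mid S_0=s\big]$. *)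

theory Defs
  imports "HOL-Probability.Probability"
begin

text \<open>The family Pr of path
measures (Pr s = law of the process started in S_0 = s under the stationary
policy pi) is characterised by the one-step unfolding equation below, which
determines it uniquely (Ionescu-Tulcea).\<close>

definition is_path_kernel ::
  "'s measure \<Rightarrow> 'a measure \<Rightarrow> ('s \<times> 'a \<Rightarrow> 's measure) \<Rightarrow> ('s \<Rightarrow> 'a measure)
   \<Rightarrow> ('s \<Rightarrow> ('s \<times> 'a) stream measure) \<Rightarrow> bool" where
  "is_path_kernel M Ma P pol Pr \<longleftrightarrow>
     Pr \<in> M \<rightarrow>\<^sub>M prob_algebra (stream_space (M \<Otimes>\<^sub>M Ma)) \<and>
     (\<forall>s\<in>space M. Pr s =
        pol s \<bind> (\<lambda>a. P (s, a) \<bind>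
          (\<lambda>s'. distr (Pr s') (stream_space (M \<Otimes>\<^sub>M Ma)) (\<lambda>\<omega>. (s, a) ## \<omega>))))"

definition absorbing ::
  "('s \<Rightarrow> ('s \<times> 'a) stream measure) \<Rightarrow> 's set \<Rightarrow> bool" where
  "absorbing Pr X \<longleftrightarrow> (\<forall>s\<in>X. prob_space.prob (Pr s) {\<omega>\<in>space (Pr s). fst (\<omega> !! 1) \<in> X} = 1)"

text \<open>step^(A,B)(rho): number of indices i before the first hitting time of B with s_i \<in> A
(i < min{j. s_j \<in> B} iff no s_j with j \<le> i lies in B); value \<infinity> if infinitely many.\<close>
definition step_AB :: "'s set \<Rightarrow> 's set \<Rightarrow> 's stream \<Rightarrow> ennreal" where
  "step_AB A B \<rho> =
     (let X = {i. (\<forall>j\<le>i. \<rho> !! j \<notin> B) \<and> \<rho> !! i \<in> A}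
      in if finite X then ennreal (real (card X)) else \<infinity>)"

definition N_count :: "'s set \<Rightarrow> nat \<Rightarrow> 's stream \<Rightarrow> nat" where
  "N_count U t \<rho> = card {i. i < t \<and> \<rho> !! i \<in> U}"

definition reward :: "real \<Rightarrow> real \<Rightarrow> 's set \<Rightarrow> 's set \<Rightarrow> 's \<Rightarrow> 'a \<Rightarrow> 's \<Rightarrow> real" where
  "reward rB rAB A B s a s' = rB * indicator B s - rAB * indicator (A - B) s"

definition value_fun ::
  "('s \<Rightarrow> ('s \<times> 'a) stream measure) \<Rightarrow> real \<Rightarrow> ('s \<Rightarrow> 'a \<Rightarrow> 's \<Rightarrow> real)
   \<Rightarrow> 's set \<Rightarrow> 's set \<Rightarrow> 's \<Rightarrow> real" where
  "value_fun Pr \<gamma> r A B s =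
     integral\<^sup>L (Pr s) (\<lambda>\<omega>. \<Sum>t. \<gamma> ^ N_count (A \<union> B) t (smap fst \<omega>) *
        r (fst (\<omega> !! t)) (snd (\<omega> !! t)) (fst (\<omega> !! Suc t)))"

end

theory Submission
  imports Defs
begin


locale mdp =
  fixes M :: "'s measure" and Ma :: "'a measure"
    and P :: "'s \<times> 'a \<Rightarrow> 's measure"
    and pol :: "'s \<Rightarrow> 'a measure"
    and Pr :: "'s \<Rightarrow> ('s \<times> 'a) stream measure"
  assumes P_kernel: "P \<in> M \<Otimes>\<^sub>M Ma \<rightarrow>\<^sub>M prob_algebra M"
    and pol_kernel: "pol \<in> M \<rightarrow>\<^sub>M prob_algebra Ma"
    and path: "is_path_kernel M Ma P pol Pr"
begin

abbreviation "SP \<equiv> stream_space (M \<Otimes>\<^sub>M Ma)"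

definition Q :: "'s \<Rightarrow> 's measure" where "Q s = pol s \<bind> (\<lambda>a. P (s, a))"

lemma Pr_meas: "Pr \<in> M \<rightarrow>\<^sub>M prob_algebra SP"
  using path unfolding is_path_kernel_def by auto

lemma Pr_eq: "s \<in> space M \<Longrightarrow> Pr s =
        pol s \<bind> (\<lambda>a. P (s, a) \<bind>
          (\<lambda>s'. distr (Pr s') SP (\<lambda>\<omega>. (s, a) ## \<omega>)))"
  using path unfolding is_path_kernel_def by auto

lemma Pr_prob: "s \<in> space M \<Longrightarrow> prob_space (Pr s)"
  using measurable_space[OF Pr_meas] by (auto simp: space_prob_algebra)

lemma Pr_sets: "s \<in> space M \<Longrightarrow> sets (Pr s) = sets SP"
  using measurable_space[OF Pr_meas] by (auto simp: space_prob_algebra)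

lemma Pa_meas: "s \<in> space M \<Longrightarrow> (\<lambda>a. P (s, a)) \<in> Ma \<rightarrow>\<^sub>M prob_algebra M"
  by (rule measurable_compose[OF _ P_kernel]) measurable

lemma pol_space: "s \<in> space M \<Longrightarrow> pol s \<in> space (prob_algebra Ma)"
  using measurable_space[OF pol_kernel] by auto

lemma Q_meas: "Q \<in> M \<rightarrow>\<^sub>M prob_algebra M"
  unfolding Q_def
  by (rule measurable_bind_prob_space2[OF pol_kernel]) (simp add: P_kernel)

lemma Q_prob: "s \<in> space M \<Longrightarrow> prob_space (Q s)"
  using measurable_space[OF Q_meas] by (auto simp: space_prob_algebra)

lemma Q_sets: "s \<in> space M \<Longrightarrow> sets (Q s) = sets M"
  using measurable_space[OF Q_meas] by (auto simp: space_prob_algebra)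

lemma distr_meas: "s \<in> space M \<Longrightarrow> a \<in> space Ma \<Longrightarrow>
   (\<lambda>s'. distr (Pr s') SP (\<lambda>\<omega>. (s, a) ## \<omega>)) \<in> M \<rightarrow>\<^sub>M subprob_algebra SP"
  apply (rule measurable_compose[OF measurable_prob_algebraD[OF Pr_meas]])
  apply (rule measurable_distr)
  by measurable

lemma inner_meas: "s \<in> space M \<Longrightarrow>
   (\<lambda>a. P (s, a) \<bind> (\<lambda>s'. distr (Pr s') SP (\<lambda>\<omega>. (s, a) ## \<omega>))) \<in> Ma \<rightarrow>\<^sub>M subprob_algebra SP"
proof (rule measurable_bind[where N=M])
  assume s: "s \<in> space M"
  show "(\<lambda>a. P (s, a)) \<in> Ma \<rightarrow>\<^sub>M subprob_algebra M"
    by (rule measurable_prob_algebraD[OF Pa_meas[OF s]])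
  have "Pr \<in> M \<rightarrow>\<^sub>M subprob_algebra SP" by (rule measurable_prob_algebraD[OF Pr_meas])
  then have [measurable]: "(\<lambda>x. Pr (snd x)) \<in> Ma \<Otimes>\<^sub>M M \<rightarrow>\<^sub>M subprob_algebra SP"
    by measurable
  show "(\<lambda>x. distr (Pr (snd x)) SP ((##) (s, fst x))) \<in> Ma \<Otimes>\<^sub>M M \<rightarrow>\<^sub>M subprob_algebra SP"
    apply (rule measurable_distr2[where M=SP])
    using s by measurable
qed

lemma sets_pol: "s \<in> space M \<Longrightarrow> sets (pol s) = sets Ma"
  using pol_space by (auto simp: space_prob_algebra)

lemma space_pol: "s \<in> space M \<Longrightarrow> space (pol s) = space Ma"
  by (rule sets_eq_imp_space_eq, erule sets_pol)

lemma space_Pr: "s \<in> space M \<Longrightarrow> space (Pr s) = space SP"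
  by (rule sets_eq_imp_space_eq, erule Pr_sets)

lemma space_Q: "s \<in> space M \<Longrightarrow> space (Q s) = space M"
  by (rule sets_eq_imp_space_eq, erule Q_sets)

lemma sets_P: "s \<in> space M \<Longrightarrow> a \<in> space Ma \<Longrightarrow> sets (P (s, a)) = sets M"
  using measurable_space[OF Pa_meas] by (auto simp: space_prob_algebra)

lemma space_P: "s \<in> space M \<Longrightarrow> a \<in> space Ma \<Longrightarrow> space (P (s, a)) = space M"
  by (rule sets_eq_imp_space_eq, erule (1) sets_P)

lemma Pr_sub: "Pr \<in> M \<rightarrow>\<^sub>M subprob_algebra SP"
  by (rule measurable_prob_algebraD[OF Pr_meas])

lemma nn_Pr_meas: "g \<in> borel_measurable SP \<Longrightarrow> (\<lambda>s. \<integral>\<^sup>+\<omega>. g \<omega> \<partial>Pr s) \<in> borel_measurable M"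
  by (rule measurable_compose[OF Pr_sub nn_integral_measurable_subprob_algebra])

lemma int_Pr_meas: "(g :: _ \<Rightarrow> real) \<in> borel_measurable SP \<Longrightarrow> (\<lambda>s. \<integral>\<omega>. g \<omega> \<partial>Pr s) \<in> borel_measurable M"
  by (rule measurable_compose[OF Pr_sub integral_measurable_subprob_algebra])

lemma smap_fst_meas[measurable]: "smap fst \<in> SP \<rightarrow>\<^sub>M stream_space M"
  by measurable

lemma inner_meas': "s \<in> space M \<Longrightarrow>
   (\<lambda>a. P (s, a) \<bind> (\<lambda>s'. distr (Pr s') SP (\<lambda>\<omega>. (s, a) ## \<omega>))) \<in> pol s \<rightarrow>\<^sub>M subprob_algebra SP"
  using inner_meas by (simp add: measurable_cong_sets[OF sets_pol refl])

lemma distr_meas': "s \<in> space M \<Longrightarrow> a \<in> space Ma \<Longrightarrow>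
   (\<lambda>s'. distr (Pr s') SP (\<lambda>\<omega>. (s, a) ## \<omega>)) \<in> P (s, a) \<rightarrow>\<^sub>M subprob_algebra SP"
  using distr_meas by (simp add: measurable_cong_sets[OF sets_P refl])

lemma markov_nn:
  assumes s: "s \<in> space M" and phi[measurable]: "\<phi> \<in> borel_measurable (stream_space M)"
  shows "(\<integral>\<^sup>+\<omega>. \<phi> (smap fst \<omega>) \<partial>Pr s) = (\<integral>\<^sup>+s'. (\<integral>\<^sup>+\<omega>. \<phi> (s ## smap fst \<omega>) \<partial>Pr s') \<partial>Q s)"
proof -
  have "(\<integral>\<^sup>+\<omega>. \<phi> (smap fst \<omega>) \<partial>Pr s) =
     (\<integral>\<^sup>+a. \<integral>\<^sup>+\<omega>. \<phi> (smap fst \<omega>) \<partial>(P (s, a) \<bind> (\<lambda>s'. distr (Pr s') SP (\<lambda>\<omega>. (s, a) ## \<omega>))) \<partial>pol s)"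
    unfolding Pr_eq[OF s] 
    by (rule nn_integral_bind[OF _ inner_meas'[OF s]]) measurable
  also have "\<dots> = (\<integral>\<^sup>+a. \<integral>\<^sup>+s'. \<integral>\<^sup>+\<omega>. \<phi> (smap fst \<omega>) \<partial>distr (Pr s') SP (\<lambda>\<omega>. (s, a) ## \<omega>) \<partial>P (s, a) \<partial>pol s)"
    apply (rule nn_integral_cong)
    apply (rule nn_integral_bind[OF _ distr_meas'[OF s]])
    using s by (auto simp: space_pol)
  also have "\<dots> = (\<integral>\<^sup>+a. \<integral>\<^sup>+s'. \<integral>\<^sup>+\<omega>. \<phi> (s ## smap fst \<omega>) \<partial>Pr s' \<partial>P (s, a) \<partial>pol s)"
  proof (intro nn_integral_cong)
    fix a s' assume a: "a \<in> space (pol s)" and s': "s' \<in> space (P (s, a))"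
    have "a \<in> space Ma" using a s by (simp add: space_pol)
    have s'M: "s' \<in> space M" using s' s \<open>a \<in> space Ma\<close> by (simp add: space_P)
    show "(\<integral>\<^sup>+\<omega>. \<phi> (smap fst \<omega>) \<partial>distr (Pr s') SP (\<lambda>\<omega>. (s, a) ## \<omega>)) = (\<integral>\<^sup>+\<omega>. \<phi> (s ## smap fst \<omega>) \<partial>Pr s')"
      apply (subst nn_integral_distr)
      using s \<open>a \<in> space Ma\<close> by (auto simp: measurable_cong_sets[OF Pr_sets[OF s'M] refl])
  qed
  also have "\<dots> = (\<integral>\<^sup>+s'. (\<integral>\<^sup>+\<omega>. \<phi> (s ## smap fst \<omega>) \<partial>Pr s') \<partial>Q s)"
    unfolding Q_def
    apply (rule nn_integral_bind[symmetric, where B=M])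
     apply (rule nn_Pr_meas) using s apply measurable
    using measurable_prob_algebraD[OF Pa_meas[OF s]] 
    by (simp add: measurable_cong_sets[OF sets_pol[OF s] refl])
  finally show ?thesis .
qed

lemma int_bound:
  fixes f :: "_ \<Rightarrow> real"
  assumes "prob_space N" "f \<in> borel_measurable N" "\<And>x. x \<in> space N \<Longrightarrow> \<bar>f x\<bar> \<le> K"
  shows "integrable N f" "\<bar>\<integral>x. f x \<partial>N\<bar> \<le> K"
proof -
  interpret prob_space N by fact
  show i: "integrable N f"
    by (rule integrable_const_bound[where B=K]) (use assms in auto)
  have "\<integral>x. f x \<partial>N \<le> K" by (rule integral_le_const[OF i]) (use assms abs_le_iff in auto)
  moreover have "-K \<le> \<integral>x. f x \<partial>N"
  proof (rule integral_ge_const[OF i], rule AE_I2)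
    fix x assume "x \<in> space N" then show "-K \<le> f x" using assms(3)[of x] by linarith
  qed
  ultimately show "\<bar>\<integral>x. f x \<partial>N\<bar> \<le> K" by auto
qed

lemma sub_AE_le1: "N \<in> L \<rightarrow>\<^sub>M subprob_algebra K \<Longrightarrow> AE x in L. emeasure (N x) (space (N x)) \<le> ennreal 1"
  apply (rule AE_I2)
  apply (drule (1) measurable_space)
  by (auto simp: space_subprob_algebra subprob_space.emeasure_space_le_1)

lemma pol_fin: "s \<in> space M \<Longrightarrow> finite_measure (pol s)"
  using pol_space by (auto simp: space_prob_algebra prob_space.axioms(1))

lemma P_fin: "s \<in> space M \<Longrightarrow> a \<in> space Ma \<Longrightarrow> finite_measure (P (s, a))"
  using measurable_space[OF Pa_meas] by (auto simp: space_prob_algebra prob_space.axioms(1))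

lemma markov_int:
  assumes s: "s \<in> space M" and phi[measurable]: "(\<phi> :: _ \<Rightarrow> real) \<in> borel_measurable (stream_space M)"
    and bnd: "\<And>\<rho>. \<bar>\<phi> \<rho>\<bar> \<le> K"
  shows "(\<integral>\<omega>. \<phi> (smap fst \<omega>) \<partial>Pr s) = (\<integral>s'. (\<integral>\<omega>. \<phi> (s ## smap fst \<omega>) \<partial>Pr s') \<partial>Q s)"
proof -
  have "(\<integral>\<omega>. \<phi> (smap fst \<omega>) \<partial>Pr s) =
     (\<integral>a. \<integral>\<omega>. \<phi> (smap fst \<omega>) \<partial>(P (s, a) \<bind> (\<lambda>s'. distr (Pr s') SP (\<lambda>\<omega>. (s, a) ## \<omega>))) \<partial>pol s)"
    unfolding Pr_eq[OF s] 
    apply (rule integral_bind[OF _ _ inner_meas'[OF s] pol_fin[OF s] sub_AE_le1[OF inner_meas'[OF s]]])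
    using bnd by measurable
  also have "\<dots> = (\<integral>a. \<integral>s'. \<integral>\<omega>. \<phi> (smap fst \<omega>) \<partial>distr (Pr s') SP (\<lambda>\<omega>. (s, a) ## \<omega>) \<partial>P (s, a) \<partial>pol s)"
  proof (rule Bochner_Integration.integral_cong[OF refl])
    fix a assume a: "a \<in> space (pol s)"
    then have aM: "a \<in> space Ma" using s by (simp add: space_pol)
    show "(\<integral>\<omega>. \<phi> (smap fst \<omega>) \<partial>(P (s, a) \<bind> (\<lambda>s'. distr (Pr s') SP (\<lambda>\<omega>. (s, a) ## \<omega>)))) = 
      (\<integral>s'. \<integral>\<omega>. \<phi> (smap fst \<omega>) \<partial>distr (Pr s') SP (\<lambda>\<omega>. (s, a) ## \<omega>) \<partial>P (s, a))"
    apply (rule integral_bind[OF _ _ distr_meas'[OF s aM] P_fin[OF s aM] sub_AE_le1[OF distr_meas'[OF s aM]]])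
    using bnd by measurable
  qed
  also have "\<dots> = (\<integral>a. \<integral>s'. \<integral>\<omega>. \<phi> (s ## smap fst \<omega>) \<partial>Pr s' \<partial>P (s, a) \<partial>pol s)"
  proof (intro Bochner_Integration.integral_cong[OF refl])
    fix a s' assume a: "a \<in> space (pol s)" and s': "s' \<in> space (P (s, a))"
    have "a \<in> space Ma" using a s by (simp add: space_pol)
    have s'M: "s' \<in> space M" using s' s \<open>a \<in> space Ma\<close> by (simp add: space_P)
    show "(\<integral>\<omega>. \<phi> (smap fst \<omega>) \<partial>distr (Pr s') SP (\<lambda>\<omega>. (s, a) ## \<omega>)) = (\<integral>\<omega>. \<phi> (s ## smap fst \<omega>) \<partial>Pr s')"
      apply (subst integral_distr)
      using s \<open>a \<in> space Ma\<close> by (auto simp: measurable_cong_sets[OF Pr_sets[OF s'M] refl])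
  qed
  also have "\<dots> = (\<integral>s'. (\<integral>\<omega>. \<phi> (s ## smap fst \<omega>) \<partial>Pr s') \<partial>Q s)"
    unfolding Q_def
    apply (rule integral_bind[symmetric, where K=M and B=K and B'=1])
        apply (rule int_Pr_meas) using s apply measurable
    subgoal for s'
      apply (rule int_bound(2)[OF Pr_prob])
      using s bnd by (auto simp: measurable_cong_sets[OF Pr_sets refl])
    using measurable_prob_algebraD[OF Pa_meas[OF s]] 
      apply (simp add: measurable_cong_sets[OF sets_pol[OF s] refl])
     apply (rule pol_fin[OF s])
    apply (rule sub_AE_le1)
    using measurable_prob_algebraD[OF Pa_meas[OF s]] 
    by (simp add: measurable_cong_sets[OF sets_pol[OF s] refl])
  finally show ?thesis .
qed

end



definition Gm :: "real \<Rightarrow> 's set \<Rightarrow> 's \<Rightarrow> real" where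
  "Gm \<gamma> U x = (if x \<in> U then \<gamma> else 1)"
definition rw :: "real \<Rightarrow> real \<Rightarrow> 's set \<Rightarrow> 's set \<Rightarrow> 's \<Rightarrow> real" where
  "rw rB rAB A B x = rB * indicator B x - rAB * indicator (A - B) x"
definition pw :: "real \<Rightarrow> 's set \<Rightarrow> 's stream \<Rightarrow> nat \<Rightarrow> real" where
  "pw \<gamma> U \<rho> t = (\<Prod>i<t. Gm \<gamma> U (\<rho> !! i))"
definition Sn :: "real \<Rightarrow> real \<Rightarrow> real \<Rightarrow> 's set \<Rightarrow> 's set \<Rightarrow> nat \<Rightarrow> 's stream \<Rightarrow> real" where
  "Sn \<gamma> rB rAB A B n \<rho> = (\<Sum>t<n. pw \<gamma> (A \<union> B) \<rho> t * rw rB rAB A B (\<rho> !! t))"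

lemma N_count_Suc: "N_count U (Suc t) \<rho> = N_count U t \<rho> + (if \<rho> !! t \<in> U then 1 else 0)"
proof -
  have "{i. i < Suc t \<and> \<rho> !! i \<in> U} = {i. i < t \<and> \<rho> !! i \<in> U} \<union> (if \<rho> !! t \<in> U then {t} else {})"
    by (auto simp: less_Suc_eq)
  then show ?thesis unfolding N_count_def by (auto simp: card_insert_if)
qed

lemma pow_N_count: "\<gamma> ^ N_count U t \<rho> = pw \<gamma> U \<rho> t"
proof (induction t)
  case 0 then show ?case by (simp add: N_count_def pw_def)
next
  case (Suc t)
  then show ?case by (simp add: N_count_Suc pw_def Gm_def power_add)
qed

lemma pw_Suc: "pw \<gamma> U \<rho> (Suc t) = pw \<gamma> U \<rho> t * Gm \<gamma> U (\<rho> !! t)"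
  by (simp add: pw_def)

lemma pw_0: "pw \<gamma> U \<rho> 0 = 1" by (simp add: pw_def)

lemma pw_Cons: "pw \<gamma> U (x ## \<rho>) (Suc t) = Gm \<gamma> U x * pw \<gamma> U \<rho> t"
  unfolding pw_def by (subst prod.lessThan_Suc_shift) simp

lemma pw_bounds: "0 < \<gamma> \<Longrightarrow> \<gamma> \<le> 1 \<Longrightarrow> 0 \<le> pw \<gamma> U \<rho> t \<and> pw \<gamma> U \<rho> t \<le> 1"
  unfolding pw_def by (auto simp: Gm_def intro!: prod_nonneg prod_le_1)

lemma geom: "\<gamma> \<noteq> 1 \<Longrightarrow> (\<Sum>t<n. pw \<gamma> U \<rho> t * indicator U (\<rho> !! t)) = (1 - pw \<gamma> U \<rho> n) / (1 - \<gamma>)"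
proof (induction n)
  case 0 then show ?case by (simp add: pw_def)
next
  case (Suc n)
  then show ?case by (auto simp: pw_Suc Gm_def field_simps)
qed

lemma term_bound:
  assumes "0 < \<gamma>" "\<gamma> \<le> 1" "0 \<le> rB" "0 \<le> rAB"
  shows "\<bar>pw \<gamma> (A \<union> B) \<rho> t * rw rB rAB A B (\<rho> !! t)\<bar> \<le> (rB + rAB) * (pw \<gamma> (A \<union> B) \<rho> t * indicator (A \<union> B) (\<rho> !! t))"
  using pw_bounds[OF assms(1,2), of "A \<union> B" \<rho> t] assms
    mult_nonneg_nonneg[of "pw \<gamma> (A \<union> B) \<rho> t" rAB] mult_nonneg_nonneg[of "pw \<gamma> (A \<union> B) \<rho> t" rB]
  by (auto simp: rw_def indicator_def abs_mult algebra_simps)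

lemma Sn_bound:
  assumes "0 < \<gamma>" "\<gamma> < 1" "0 \<le> rB" "0 \<le> rAB"
  shows "\<bar>Sn \<gamma> rB rAB A B n \<rho>\<bar> \<le> (rB + rAB) / (1 - \<gamma>)"
proof -
  have "\<bar>Sn \<gamma> rB rAB A B n \<rho>\<bar> \<le> (\<Sum>t<n. \<bar>pw \<gamma> (A \<union> B) \<rho> t * rw rB rAB A B (\<rho> !! t)\<bar>)"
    unfolding Sn_def by (rule sum_abs)
  also have "\<dots> \<le> (\<Sum>t<n. (rB + rAB) * (pw \<gamma> (A \<union> B) \<rho> t * indicator (A \<union> B) (\<rho> !! t)))"
    by (rule sum_mono, rule term_bound) (use assms in auto)
  also have "\<dots> = (rB + rAB) * ((1 - pw \<gamma> (A \<union> B) \<rho> n) / (1 - \<gamma>))"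
    using assms by (subst sum_distrib_left[symmetric], subst geom) auto
  also have "\<dots> \<le> (rB + rAB) * (1 / (1 - \<gamma>))"
    using pw_bounds[of \<gamma> "A \<union> B" \<rho> n] assms
    by (intro mult_left_mono divide_right_mono) auto
  finally show ?thesis by simp
qed

lemma Sn_lim:
  assumes "0 < \<gamma>" "\<gamma> < 1" "0 \<le> rB" "0 \<le> rAB"
  shows "(\<lambda>n. Sn \<gamma> rB rAB A B n \<rho>) \<longlonglongrightarrow> (\<Sum>t. pw \<gamma> (A \<union> B) \<rho> t * rw rB rAB A B (\<rho> !! t))"
proof -
  have s1: "summable (\<lambda>t. pw \<gamma> (A \<union> B) \<rho> t * indicator (A \<union> B) (\<rho> !! t))"
  proof (rule summableI_nonneg_bounded[where x="1 / (1 - \<gamma>)"])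
    fix n show "0 \<le> pw \<gamma> (A \<union> B) \<rho> n * indicator (A \<union> B) (\<rho> !! n)"
      using pw_bounds[of \<gamma> "A \<union> B" \<rho> n] assms by auto
    show "(\<Sum>i<n. pw \<gamma> (A \<union> B) \<rho> i * indicator (A \<union> B) (\<rho> !! i)) \<le> 1 / (1 - \<gamma>)"
      using pw_bounds[of \<gamma> "A \<union> B" \<rho> n] assms
      by (subst geom) (auto intro: divide_right_mono)
  qed
  have "summable (\<lambda>t. pw \<gamma> (A \<union> B) \<rho> t * rw rB rAB A B (\<rho> !! t))"
    apply (rule summable_comparison_test'[where g="\<lambda>t. (rB + rAB) * (pw \<gamma> (A \<union> B) \<rho> t * indicator (A \<union> B) (\<rho> !! t))" and N=0])
    using s1 apply (simp add: summable_mult)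
    using term_bound[of \<gamma> rB rAB A B \<rho>] assms by auto
  then show ?thesis unfolding Sn_def by (rule summable_LIMSEQ)
qed

lemma Sn_Cons: "Sn \<gamma> rB rAB A B (Suc n) (x ## \<rho>) = rw rB rAB A B x + Gm \<gamma> (A \<union> B) x * Sn \<gamma> rB rAB A B n \<rho>"
  unfolding Sn_def
  by (subst sum.lessThan_Suc_shift) (simp add: pw_Cons sum_distrib_left mult.assoc pw_0)

lemma Sn_0: "Sn \<gamma> rB rAB A B 0 \<rho> = 0" by (simp add: Sn_def)

lemma Sn_meas[measurable]: 
  assumes [measurable]: "A \<in> sets M" "B \<in> sets M" shows "Sn \<gamma> rB rAB A B n \<in> borel_measurable (stream_space M)"
  unfolding Sn_def pw_def Gm_def rw_def by measurable

lemma step_Cons: "step_AB A B (x ## \<rho>) = (if x \<in> B then 0 else indicator A x + step_AB A B \<rho>)"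
proof -
  define X where "X \<rho> = {i. (\<forall>j\<le>i. \<rho> !! j \<notin> B) \<and> \<rho> !! i \<in> A}" for \<rho>
  have sAB: "step_AB A B \<rho> = (if finite (X \<rho>) then ennreal (real (card (X \<rho>))) else \<infinity>)" for \<rho>
    unfolding step_AB_def X_def by simp
  show ?thesis
  proof (cases "x \<in> B")
    case True
    then have "X (x ## \<rho>) = {}" unfolding X_def by auto
    then show ?thesis using True by (simp add: sAB)
  next
    case False
    have all: "(\<forall>j\<le>Suc k. (x ## \<rho>) !! j \<notin> B) \<longleftrightarrow> x \<notin> B \<and> (\<forall>j\<le>k. \<rho> !! j \<notin> B)" for k
      apply auto
      subgoal for j by (cases j) auto
      done
    have eq: "X (x ## \<rho>) = (if x \<in> A then {0} else {}) \<union> Suc ` X \<rho>"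
    proof (rule set_eqI)
      fix i show "i \<in> X (x ## \<rho>) \<longleftrightarrow> i \<in> (if x \<in> A then {0} else {}) \<union> Suc ` X \<rho>"
        using False by (cases i) (auto simp: X_def all)
    qed
    have fin: "finite (X (x ## \<rho>)) \<longleftrightarrow> finite (X \<rho>)"
      unfolding eq by (auto simp: finite_image_iff)
    have card: "finite (X \<rho>) \<Longrightarrow> card (X (x ## \<rho>)) = (if x \<in> A then 1 else 0) + card (X \<rho>)"
      unfolding eq by (auto simp: card_image)
    show ?thesis using False fin card
      by (auto simp: sAB ennreal_plus)
  qed
qed

lemma step_meas[measurable]: "A \<in> sets M \<Longrightarrow> B \<in> sets M \<Longrightarrow> step_AB A B \<in> borel_measurable (stream_space M)"
proof -
  assume [measurable]: "A \<in> sets M" "B \<in> sets M"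
  define X where "X \<rho> = {i. (\<forall>j\<le>i. \<rho> !! j \<notin> B) \<and> \<rho> !! i \<in> A}" for \<rho>
  have "step_AB A B \<rho> = (\<Sum>i. indicator (X \<rho>) i)" for \<rho>
  proof -
    have "(\<Sum>i. indicator (X \<rho>) i :: ennreal) = (\<integral>\<^sup>+i. indicator (X \<rho>) i \<partial>count_space UNIV)"
      by (simp add: nn_integral_count_space_nat)
    also have "\<dots> = emeasure (count_space UNIV) (X \<rho>)" by simp
    also have "\<dots> = step_AB A B \<rho>"
      by (simp add: emeasure_count_space step_AB_def X_def ennreal_of_nat_eq_real_of_nat)
    finally show ?thesis by simp
  qed
  moreover have "(\<lambda>\<rho>. \<Sum>i. indicator (X \<rho>) i :: ennreal) \<in> borel_measurable (stream_space M)"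
  proof (rule borel_measurable_suminf_order)
    fix i
    have "(\<lambda>\<rho>. indicator (X \<rho>) i :: ennreal) = (\<lambda>\<rho>. if (\<forall>j\<in>{..i}. \<rho> !! j \<notin> B) \<and> \<rho> !! i \<in> A then 1 else 0)"
      by (auto simp: X_def indicator_def fun_eq_iff)
    also have "\<dots> \<in> borel_measurable (stream_space M)" by measurable
    finally show "(\<lambda>\<rho>. indicator (X \<rho>) i :: ennreal) \<in> borel_measurable (stream_space M)" .
  qed
  ultimately show ?thesis by (metis (no_types, lifting) ext)
qed




context mdp begin

lemma meas_Pr: "s \<in> space M \<Longrightarrow> f \<in> SP \<rightarrow>\<^sub>M N \<Longrightarrow> f \<in> Pr s \<rightarrow>\<^sub>M N"
  using measurable_cong_sets[OF Pr_sets[of s] refl, of N] by simp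

lemma meas_Q: "s \<in> space M \<Longrightarrow> f \<in> M \<rightarrow>\<^sub>M N \<Longrightarrow> f \<in> Q s \<rightarrow>\<^sub>M N"
  using measurable_cong_sets[OF Q_sets[of s] refl, of N] by simp

lemma fst0:
  assumes s: "s \<in> space M" and g[measurable]: "g \<in> borel_measurable M"
  shows "(\<integral>\<^sup>+\<omega>. g (fst (\<omega> !! 0)) \<partial>Pr s) = g s"
proof -
  have "(\<integral>\<^sup>+\<omega>. g (fst (\<omega> !! 0)) \<partial>Pr s) = (\<integral>\<^sup>+\<omega>. g (smap fst \<omega> !! 0) \<partial>Pr s)" by simp
  also have "\<dots> = (\<integral>\<^sup>+s'. (\<integral>\<^sup>+\<omega>. g ((s ## smap fst \<omega>) !! 0) \<partial>Pr s') \<partial>Q s)"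
    by (rule markov_nn[OF s]) measurable
  also have "\<dots> = (\<integral>\<^sup>+s'. g s \<partial>Q s)"
    apply (rule nn_integral_cong)
    using s by (simp add: space_Q prob_space.emeasure_space_1[OF Pr_prob])
  also have "\<dots> = g s" using s by (simp add: prob_space.emeasure_space_1[OF Q_prob])
  finally show ?thesis .
qed

lemma absorb_AE:
  assumes I[measurable]: "I \<in> sets M" and abs: "absorbing Pr I" and s: "s \<in> I"
  shows "AE s' in Q s. s' \<in> I"
proof -
  have sM: "s \<in> space M" using s sets.sets_into_space[OF I] by auto
  interpret Q: prob_space "Q s" by (rule Q_prob[OF sM])
  interpret PP: prob_space "Pr s" by (rule Pr_prob[OF sM])
  have "emeasure (Pr s) {\<omega>\<in>space (Pr s). fst (\<omega> !! 1) \<in> I} = 1"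
    using abs s unfolding absorbing_def by (simp add: PP.emeasure_eq_measure)
  moreover have "emeasure (Pr s) {\<omega>\<in>space (Pr s). fst (\<omega> !! 1) \<in> I} = (\<integral>\<^sup>+\<omega>. indicator I (smap fst \<omega> !! 1) \<partial>Pr s)"
  proof -
    have "(\<lambda>\<omega>. fst (\<omega> !! 1) \<in> I) \<in> measurable (Pr s) (count_space UNIV)"
    proof -
      have "(\<lambda>\<omega>. fst (\<omega> !! 1) \<in> I) \<in> SP \<rightarrow>\<^sub>M count_space UNIV" by measurable
      from meas_Pr[OF sM this] show ?thesis by simp
    qed
    then have "{\<omega>\<in>space (Pr s). fst (\<omega> !! 1) \<in> I} \<in> sets (Pr s)" by (rule predE)
    then have "emeasure (Pr s) {\<omega>\<in>space (Pr s). fst (\<omega> !! 1) \<in> I} = 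
      (\<integral>\<^sup>+\<omega>. indicator {\<omega>\<in>space (Pr s). fst (\<omega> !! 1) \<in> I} \<omega> \<partial>Pr s)"
      by (rule nn_integral_indicator[symmetric])
    also have "\<dots> = (\<integral>\<^sup>+\<omega>. indicator I (smap fst \<omega> !! 1) \<partial>Pr s)"
      by (rule nn_integral_cong) (auto simp: indicator_def)
    finally show ?thesis .
  qed
  moreover have "\<dots> = (\<integral>\<^sup>+s'. (\<integral>\<^sup>+\<omega>. indicator I ((s ## smap fst \<omega>) !! 1) \<partial>Pr s') \<partial>Q s)"
    by (rule markov_nn[OF sM]) measurable
  moreover have "\<dots> = (\<integral>\<^sup>+s'. indicator I s' \<partial>Q s)"
  proof (rule nn_integral_cong)
    fix s' assume "s' \<in> space (Q s)"
    then have "s' \<in> space M" using sM by (simp add: space_Q)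
    then show "(\<integral>\<^sup>+\<omega>. indicator I ((s ## smap fst \<omega>) !! 1) \<partial>Pr s') = indicator I s'"
      using fst0[of s' "indicator I"] by simp
  qed
  moreover have "\<dots> = emeasure (Q s) I" using sM by (simp add: Q_sets)
  ultimately have "emeasure (Q s) I = 1" by simp
  then show ?thesis
    using sM by (subst Q.AE_in_set_eq_1) (auto simp: Q_sets Q.emeasure_eq_measure)
qed

lemma h_rec:
  assumes [measurable]: "A \<in> sets M" "B \<in> sets M" and s: "s \<in> space M"
  shows "(\<integral>\<^sup>+\<omega>. step_AB A B (smap fst \<omega>) \<partial>Pr s) =
    (if s \<in> B then 0 else indicator A s + \<integral>\<^sup>+s'. (\<integral>\<^sup>+\<omega>. step_AB A B (smap fst \<omega>) \<partial>Pr s') \<partial>Q s)"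
proof -
  have "(\<integral>\<^sup>+\<omega>. step_AB A B (smap fst \<omega>) \<partial>Pr s) = 
     (\<integral>\<^sup>+s'. (\<integral>\<^sup>+\<omega>. step_AB A B (s ## smap fst \<omega>) \<partial>Pr s') \<partial>Q s)"
    by (rule markov_nn[OF s]) measurable
  also have "\<dots> = (\<integral>\<^sup>+s'. (if s \<in> B then 0 else indicator A s + (\<integral>\<^sup>+\<omega>. step_AB A B (smap fst \<omega>) \<partial>Pr s')) \<partial>Q s)"
  proof (rule nn_integral_cong)
    fix s' assume "s' \<in> space (Q s)"
    then have s': "s' \<in> space M" using s by (simp add: space_Q)
    interpret PP: prob_space "Pr s'" by (rule Pr_prob[OF s'])
    show "(\<integral>\<^sup>+\<omega>. step_AB A B (s ## smap fst \<omega>) \<partial>Pr s') = 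
      (if s \<in> B then 0 else indicator A s + (\<integral>\<^sup>+\<omega>. step_AB A B (smap fst \<omega>) \<partial>Pr s'))"
      unfolding step_Cons
      apply (cases "s \<in> B")
       apply simp
      apply simp
      apply (subst nn_integral_add)
        apply simp
       apply (rule meas_Pr[OF s'])
      by (measurable, simp add: PP.emeasure_space_1)
  qed
  also have "\<dots> = (if s \<in> B then 0 else indicator A s + \<integral>\<^sup>+s'. (\<integral>\<^sup>+\<omega>. step_AB A B (smap fst \<omega>) \<partial>Pr s') \<partial>Q s)"
  proof -
    interpret QQ: prob_space "Q s" by (rule Q_prob[OF s])
    show ?thesis
      apply (cases "s \<in> B")
       apply simp
      apply simp
      apply (subst nn_integral_add)
        apply simp
       apply (rule meas_Q[OF s])
       apply (rule nn_Pr_meas)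
      by (measurable, simp add: QQ.emeasure_space_1)
  qed
  finally show ?thesis .
qed

lemma Vn_rec:
  assumes [measurable]: "A \<in> sets M" "B \<in> sets M" and s: "s \<in> space M"
    and g: "0 < \<gamma>" "\<gamma> < 1" and r: "0 \<le> rB" "0 \<le> rAB"
  shows "(\<integral>\<omega>. Sn \<gamma> rB rAB A B (Suc n) (smap fst \<omega>) \<partial>Pr s) =
    rw rB rAB A B s + Gm \<gamma> (A \<union> B) s * \<integral>s'. (\<integral>\<omega>. Sn \<gamma> rB rAB A B n (smap fst \<omega>) \<partial>Pr s') \<partial>Q s"
proof -
  note bnd = Sn_bound[OF g r]
  have "(\<integral>\<omega>. Sn \<gamma> rB rAB A B (Suc n) (smap fst \<omega>) \<partial>Pr s) = 
     (\<integral>s'. (\<integral>\<omega>. Sn \<gamma> rB rAB A B (Suc n) (s ## smap fst \<omega>) \<partial>Pr s') \<partial>Q s)"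
    by (rule markov_int[OF s _ bnd]) measurable
  also have "\<dots> = (\<integral>s'. rw rB rAB A B s + Gm \<gamma> (A \<union> B) s * (\<integral>\<omega>. Sn \<gamma> rB rAB A B n (smap fst \<omega>) \<partial>Pr s') \<partial>Q s)"
  proof (rule Bochner_Integration.integral_cong[OF refl])
    fix s' assume "s' \<in> space (Q s)"
    then have s': "s' \<in> space M" using s by (simp add: space_Q)
    interpret PP: prob_space "Pr s'" by (rule Pr_prob[OF s'])
    have int: "integrable (Pr s') (\<lambda>\<omega>. Sn \<gamma> rB rAB A B n (smap fst \<omega>))"
      by (rule int_bound(1)[OF PP.prob_space_axioms _ bnd], rule meas_Pr[OF s'], measurable)
    show "(\<integral>\<omega>. Sn \<gamma> rB rAB A B (Suc n) (s ## smap fst \<omega>) \<partial>Pr s') = 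
      rw rB rAB A B s + Gm \<gamma> (A \<union> B) s * (\<integral>\<omega>. Sn \<gamma> rB rAB A B n (smap fst \<omega>) \<partial>Pr s')"
      unfolding Sn_Cons using int by (simp add: PP.prob_space)
  qed
  also have "\<dots> = rw rB rAB A B s + Gm \<gamma> (A \<union> B) s * \<integral>s'. (\<integral>\<omega>. Sn \<gamma> rB rAB A B n (smap fst \<omega>) \<partial>Pr s') \<partial>Q s"
  proof -
    interpret QQ: prob_space "Q s" by (rule Q_prob[OF s])
    have int: "integrable (Q s) (\<lambda>s'. \<integral>\<omega>. Sn \<gamma> rB rAB A B n (smap fst \<omega>) \<partial>Pr s')"
    proof (rule int_bound(1)[OF QQ.prob_space_axioms])
      show "(\<lambda>s'. \<integral>\<omega>. Sn \<gamma> rB rAB A B n (smap fst \<omega>) \<partial>Pr s') \<in> borel_measurable (Q s)"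
        by (rule meas_Q[OF s], rule int_Pr_meas) measurable
      fix s' assume "s' \<in> space (Q s)"
      then have s': "s' \<in> space M" using s by (simp add: space_Q)
      show "\<bar>\<integral>\<omega>. Sn \<gamma> rB rAB A B n (smap fst \<omega>) \<partial>Pr s'\<bar> \<le> (rB + rAB) / (1 - \<gamma>)"
        by (rule int_bound(2)[OF Pr_prob[OF s'] _ bnd], rule meas_Pr[OF s'], measurable)
    qed
    show ?thesis using int by (simp add: QQ.prob_space)
  qed
  finally show ?thesis .
qed

end



lemma ratio_aux:
  fixes \<gamma> p :: real
  assumes "0 < \<gamma>" "\<gamma> < 1" "0 < p" "p \<le> 1"
  shows "\<gamma> * (1 - p) \<le> 1 / (p * \<gamma>) - 1"
proof -
  have "\<gamma> * (1 - p) \<le> 1 - p" using assms by (simp add: mult_left_le_one_le)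
  also have "1 - p \<le> (1 - p) / p" using assms by (auto simp: le_divide_eq intro: mult_left_le)
  also have "(1 - p) / p = 1 / p - 1" using assms by (simp add: field_simps)
  also have "1 / p \<le> 1 / (p * \<gamma>)" using assms 
    by (intro divide_left_mono) (auto simp: mult_left_le_one_le)
  finally show ?thesis by simp
qed

lemma tangent:
  fixes \<gamma> x y :: real
  assumes "0 < \<gamma>"
  shows "\<gamma> powr x + \<gamma> powr x * ln \<gamma> * (y - x) \<le> \<gamma> powr y"
proof -
  have "\<gamma> powr y = \<gamma> powr x * exp ((y - x) * ln \<gamma>)"
    using assms by (simp add: powr_def exp_add[symmetric] algebra_simps)
  moreover have "1 + (y - x) * ln \<gamma> \<le> exp ((y - x) * ln \<gamma>)" by (rule exp_ge_add_one_self)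
  moreover have "0 \<le> \<gamma> powr x" by simp
  ultimately have "\<gamma> powr x * (1 + (y - x) * ln \<gamma>) \<le> \<gamma> powr y"
    by (metis mult_left_mono)
  then show ?thesis by (simp add: algebra_simps)
qed

context mdp begin

theorem main:
  assumes I_meas: "I \<in> sets M" and I_abs: "absorbing Pr I"
    and A_meas[measurable]: "A \<in> sets M" and B_meas[measurable]: "B \<in> sets M"
    and gamma: "0 < \<gamma>" "\<gamma> < 1"
    and Hbar_nonneg: "0 \<le> Hbar"
    and Hbar: "\<And>s. s \<in> I \<Longrightarrow> (\<integral>\<^sup>+ \<omega>. step_AB A B (smap fst \<omega>) \<partial>Pr s) \<le> ennreal Hbar"
    and rB: "0 < rB" and rAB: "0 < rAB"
    and ratio: "rB / rAB \<ge> 1 / (1 - \<gamma>) * (1 / \<gamma> powr (Hbar + 1) - 1)"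
  shows "\<forall>s\<in>I. value_fun Pr \<gamma> (reward rB rAB A B) A B s \<ge> - rAB * (1 - \<gamma> powr Hbar) / (1 - \<gamma>)"
proof -
  define V where "V n s = (\<integral>\<omega>. Sn \<gamma> rB rAB A B n (smap fst \<omega>) \<partial>Pr s)" for n s
  define h where "h s = (\<integral>\<^sup>+\<omega>. step_AB A B (smap fst \<omega>) \<partial>Pr s)" for s
  define hr where "hr s = enn2real (h s)" for s
  define c where "c = rAB / (1 - \<gamma>)"
  define f where "f x = c * (\<gamma> powr x - 1)" for x
  define C where "C = (rB + rAB) / (1 - \<gamma>)"
  have c_pos: "0 < c" unfolding c_def using gamma rAB by simp
  have IM: "\<And>s. s \<in> I \<Longrightarrow> s \<in> space M" using sets.sets_into_space[OF I_meas] by auto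
  have h_meas[measurable]: "h \<in> borel_measurable M" unfolding h_def by (rule nn_Pr_meas) measurable
  have hr_meas[measurable]: "hr \<in> borel_measurable M" unfolding hr_def by measurable
  have f_meas[measurable]: "f \<in> borel_measurable borel" unfolding f_def by measurable
  have V_meas[measurable]: "V n \<in> borel_measurable M" for n unfolding V_def by (rule int_Pr_meas) measurable
  have Sn_bnd: "\<bar>Sn \<gamma> rB rAB A B n \<rho>\<bar> \<le> C" for n \<rho>
    unfolding C_def by (rule Sn_bound) (use gamma rB rAB in auto)
  have V_bnd: "\<bar>V n s\<bar> \<le> C" if "s \<in> space M" for n s
    unfolding V_def by (rule int_bound(2)[OF Pr_prob[OF that] _ Sn_bnd], rule meas_Pr[OF that], measurable)
  have hr_nonneg: "0 \<le> hr s" for s unfolding hr_def by simp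
  have hI: "h s = ennreal (hr s) \<and> hr s \<le> Hbar" if "s \<in> I" for s
  proof -
    have le: "h s \<le> ennreal Hbar" using Hbar[OF that] unfolding h_def .
    then have "h s < \<top>" using ennreal_less_top le_less_trans by blast
    then show ?thesis using le unfolding hr_def
      by (auto simp: enn2real_mono Hbar_nonneg intro: enn2real_mono[THEN order_trans])
  qed
  have AEI: "AE s' in Q s. s' \<in> I" if "s \<in> I" for s by (rule absorb_AE[OF I_meas I_abs that])
  have hr_int: "integrable (Q s) hr" if "s \<in> I" for s
  proof -
    interpret QQ: prob_space "Q s" by (rule Q_prob[OF IM[OF that]])
    show ?thesis
    proof (rule QQ.integrable_const_bound[where B=Hbar])
      show "AE x in Q s. norm (hr x) \<le> Hbar"
        using AEI[OF that] by eventually_elim (use hI hr_nonneg in auto)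
      show "hr \<in> borel_measurable (Q s)" by (rule meas_Q[OF IM[OF that]]) measurable
    qed
  qed
  have h_int: "(\<integral>\<^sup>+s'. h s' \<partial>Q s) = ennreal (\<integral>s'. hr s' \<partial>Q s)" if "s \<in> I" for s
  proof -
    have "(\<integral>\<^sup>+s'. h s' \<partial>Q s) = (\<integral>\<^sup>+s'. ennreal (hr s') \<partial>Q s)"
      apply (rule nn_integral_cong_AE)
      using AEI[OF that] by eventually_elim (use hI in auto)
    also have "\<dots> = ennreal (\<integral>s'. hr s' \<partial>Q s)"
      by (rule nn_integral_eq_integral[OF hr_int[OF that]]) (use hr_nonneg in auto)
    finally show ?thesis .
  qed
  have hr_rec: "hr s = (if s \<in> B then 0 else indicator A s + (\<integral>s'. hr s' \<partial>Q s))" if "s \<in> I" for s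
  proof -
    have "h s = (if s \<in> B then 0 else indicator A s + \<integral>\<^sup>+s'. h s' \<partial>Q s)"
      unfolding h_def by (rule h_rec[OF A_meas B_meas IM[OF that]])
    also have "\<dots> = (if s \<in> B then 0 else ennreal (indicator A s + (\<integral>s'. hr s' \<partial>Q s)))"
      using h_int[OF that] integral_nonneg_AE[of hr "Q s"] hr_nonneg
      by (auto simp: indicator_def ennreal_plus)
    finally have hs: "h s = (if s \<in> B then 0 else ennreal (indicator A s + (\<integral>s'. hr s' \<partial>Q s)))" .
    have "0 \<le> indicator A s + (\<integral>s'. hr s' \<partial>Q s)"
      using integral_nonneg_AE[of hr "Q s"] hr_nonneg by simp
    then show ?thesis unfolding hr_def[of s] hs
      by (simp del: ennreal_plus)
  qed
  have f_int: "integrable (Q s) (\<lambda>s'. f (hr s'))" if "s \<in> space M" for s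
  proof (rule int_bound(1)[OF Q_prob[OF that], where K=c])
    show "(\<lambda>s'. f (hr s')) \<in> borel_measurable (Q s)" by (rule meas_Q[OF that]) measurable
    fix x
    have "0 \<le> \<gamma> powr hr x" "\<gamma> powr hr x \<le> 1"
      using gamma hr_nonneg by (auto intro: powr_le1)
    then show "\<bar>f (hr x)\<bar> \<le> c" unfolding f_def using c_pos by (auto simp: abs_mult)
  qed
  have jensen: "f (\<integral>s'. hr s' \<partial>Q s) \<le> (\<integral>s'. f (hr s') \<partial>Q s)" if "s \<in> I" for s
  proof -
    interpret QQ: prob_space "Q s" by (rule Q_prob[OF IM[OF that]])
    define m where "m = (\<integral>s'. hr s' \<partial>Q s)"
    define K where "K = c * \<gamma> powr m * ln \<gamma>"
    have "(\<integral>s'. f m + K * (hr s' - m) \<partial>Q s) \<le> (\<integral>s'. f (hr s') \<partial>Q s)"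
    proof (rule integral_mono)
      show "integrable (Q s) (\<lambda>s'. f m + K * (hr s' - m))"
        using hr_int[OF that] by auto
      show "integrable (Q s) (\<lambda>s'. f (hr s'))" by (rule f_int[OF IM[OF that]])
      fix y
      have "c * (\<gamma> powr m + \<gamma> powr m * ln \<gamma> * (hr y - m)) \<le> c * \<gamma> powr (hr y)"
        using tangent[OF gamma(1), of m "hr y"] c_pos by (intro mult_left_mono) auto
      then show "f m + K * (hr y - m) \<le> f (hr y)" unfolding f_def K_def by (simp add: algebra_simps)
    qed
    also have "(\<integral>s'. f m + K * (hr s' - m) \<partial>Q s) = f m"
      using hr_int[OF that] by (simp add: m_def QQ.prob_space algebra_simps)
    finally show ?thesis unfolding m_def .
  qed
  have fH: "f Hbar \<le> f x" if "0 \<le> x" "x \<le> Hbar" for x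
    unfolding f_def using that gamma c_pos by (intro mult_left_mono) (auto intro: powr_mono')
  have f_le0: "f x \<le> 0" if "0 \<le> x" for x
    unfolding f_def using that gamma c_pos by (auto intro!: mult_nonneg_nonpos powr_le1)
  have key: "0 \<le> rB + \<gamma> * f Hbar"
  proof -
    define p where "p = \<gamma> powr Hbar"
    have p: "0 < p" "p \<le> 1" unfolding p_def using gamma Hbar_nonneg by (auto intro: powr_le1)
    have "rAB * (1 / (1 - \<gamma>) * (1 / \<gamma> powr (Hbar + 1) - 1)) \<le> rB"
      using ratio rAB by (simp add: le_divide_eq mult.commute)
    moreover have "\<gamma> powr (Hbar + 1) = p * \<gamma>" unfolding p_def using gamma by (simp add: powr_add)
    ultimately have "c * (1 / (p * \<gamma>) - 1) \<le> rB" unfolding c_def by simp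
    moreover have "c * (\<gamma> * (1 - p)) \<le> c * (1 / (p * \<gamma>) - 1)"
      using ratio_aux[OF gamma p] c_pos by (intro mult_left_mono) auto
    ultimately show ?thesis unfolding f_def p_def[symmetric] by (simp add: algebra_simps)
  qed
  have ind: "\<forall>s\<in>I. f (hr s) \<le> V n s" for n
  proof (induction n)
    case 0
    show ?case using f_le0 hr_nonneg by (simp add: V_def Sn_0)
  next
    case (Suc n)
    show ?case
    proof
      fix s assume sI: "s \<in> I"
      have sM: "s \<in> space M" by (rule IM[OF sI])
      interpret QQ: prob_space "Q s" by (rule Q_prob[OF sM])
      define E where "E = (\<integral>s'. V n s' \<partial>Q s)"
      define m where "m = (\<integral>s'. hr s' \<partial>Q s)"
      have VS: "V (Suc n) s = rw rB rAB A B s + Gm \<gamma> (A \<union> B) s * E"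
        unfolding V_def E_def by (rule Vn_rec[OF A_meas B_meas sM gamma]) (use rB rAB in auto)
      have intV: "integrable (Q s) (V n)"
        by (rule int_bound(1)[OF QQ.prob_space_axioms _ V_bnd], rule meas_Q[OF sM], measurable,
            simp add: space_Q[OF sM])
      have E1: "(\<integral>s'. f (hr s') \<partial>Q s) \<le> E"
        unfolding E_def
        apply (rule integral_mono_AE[OF f_int[OF sM] intV])
        using AEI[OF sI] by eventually_elim (use Suc in auto)
      have E2: "f m \<le> E" using jensen[OF sI] E1 unfolding m_def by linarith
      have E3: "f Hbar \<le> E"
      proof -
        have "f Hbar \<le> (\<integral>s'. f (hr s') \<partial>Q s)"
          apply (rule QQ.integral_ge_const[OF f_int[OF sM]])
          using AEI[OF sI] by eventually_elim (use hI hr_nonneg fH in auto)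
        with E1 show ?thesis by linarith
      qed
      show "f (hr s) \<le> V (Suc n) s"
      proof (cases "s \<in> B")
        case True
        then have "hr s = 0" using hr_rec[OF sI] by simp
        then have "f (hr s) = 0" unfolding f_def using gamma by simp
        moreover have "rB + \<gamma> * f Hbar \<le> rB + \<gamma> * E" using E3 gamma by (simp add: mult_left_mono)
        ultimately show ?thesis using VS True key by (simp add: rw_def Gm_def)
      next
        case nB: False
        show ?thesis
        proof (cases "s \<in> A")
          case True
          then have "hr s = 1 + m" using hr_rec[OF sI] nB by (simp add: m_def)
          then have "f (hr s) = - rAB + \<gamma> * f m"
            unfolding f_def c_def using gamma
            by (simp add: powr_add field_simps)
          moreover have "\<gamma> * f m \<le> \<gamma> * E" using E2 gamma by (simp add: mult_left_mono)
          ultimately show ?thesis using VS True nB by (simp add: rw_def Gm_def)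
        next
          case False
          then have "hr s = m" using hr_rec[OF sI] nB by (simp add: m_def)
          then show ?thesis using VS False nB E2 by (simp add: rw_def Gm_def)
        qed
      qed
    qed
  qed
  show ?thesis
  proof
    fix s assume sI: "s \<in> I"
    have sM: "s \<in> space M" by (rule IM[OF sI])
    define F where "F \<rho> = (\<Sum>t. pw \<gamma> (A \<union> B) \<rho> t * rw rB rAB A B (\<rho> !! t))" for \<rho>
    have lim: "(\<lambda>n. Sn \<gamma> rB rAB A B n \<rho>) \<longlonglongrightarrow> F \<rho>" for \<rho>
      unfolding F_def by (rule Sn_lim) (use gamma rB rAB in auto)
    have F_meas[measurable]: "F \<in> borel_measurable (stream_space M)"
      by (rule borel_measurable_LIMSEQ_real[OF lim]) measurable
    have val: "value_fun Pr \<gamma> (reward rB rAB A B) A B s = (\<integral>\<omega>. F (smap fst \<omega>) \<partial>Pr s)"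
      unfolding value_fun_def F_def by (simp add: pow_N_count reward_def rw_def)
    have tl: "(\<lambda>n. V n s) \<longlonglongrightarrow> (\<integral>\<omega>. F (smap fst \<omega>) \<partial>Pr s)"
      unfolding V_def
    proof (rule integral_dominated_convergence[where w="\<lambda>_. C"])
      show "(\<lambda>\<omega>. F (smap fst \<omega>)) \<in> borel_measurable (Pr s)" by (rule meas_Pr[OF sM]) measurable
      show "(\<lambda>\<omega>. Sn \<gamma> rB rAB A B i (smap fst \<omega>)) \<in> borel_measurable (Pr s)" for i
        by (rule meas_Pr[OF sM]) measurable
      show "integrable (Pr s) (\<lambda>_. C)"
        using Pr_prob[OF sM] by (simp add: prob_space.axioms(1) finite_measure.integrable_const)
      show "AE x in Pr s. (\<lambda>i. Sn \<gamma> rB rAB A B i (smap fst x)) \<longlonglongrightarrow> F (smap fst x)"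
        using lim by simp
      show "AE x in Pr s. norm (Sn \<gamma> rB rAB A B i (smap fst x)) \<le> C" for i
        using Sn_bnd by simp
    qed
    have "f Hbar \<le> f (hr s)" using fH hI[OF sI] hr_nonneg by auto
    then have "f Hbar \<le> value_fun Pr \<gamma> (reward rB rAB A B) A B s"
      unfolding val
    proof (intro LIMSEQ_le_const[OF tl] exI allI impI)
      fix n show "f Hbar \<le> V n s" using \<open>f Hbar \<le> f (hr s)\<close> ind[of n] sI by force
    qed
    moreover have "f Hbar = - rAB * (1 - \<gamma> powr Hbar) / (1 - \<gamma>)"
      unfolding f_def c_def by (simp add: field_simps)
    ultimately show "value_fun Pr \<gamma> (reward rB rAB A B) A B s \<ge> - rAB * (1 - \<gamma> powr Hbar) / (1 - \<gamma>)"
      by simp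
  qed
qed

end

theorem lemma6:
  fixes M :: "'s measure" and Ma :: "'a measure"
    and P :: "'s \<times> 'a \<Rightarrow> 's measure" and \<mu> :: "'s measure"
    and pol :: "'s \<Rightarrow> 'a measure"
    and Pr :: "'s \<Rightarrow> ('s \<times> 'a) stream measure"
    and I A B :: "'s set" and \<gamma> Hbar rB rAB :: real
  assumes P_kernel: "P \<in> M \<Otimes>\<^sub>M Ma \<rightarrow>\<^sub>M prob_algebra M"
    and pol_kernel: "pol \<in> M \<rightarrow>\<^sub>M prob_algebra Ma"
    and init: "prob_space \<mu>" "sets \<mu> = sets M"
    and path: "is_path_kernel M Ma P pol Pr"
    and I_meas: "I \<in> sets M" and I_abs: "absorbing Pr I" and I_init: "emeasure \<mu> I = 1"
    and A_meas: "A \<in> sets M" and B_meas: "B \<in> sets M"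
    and gamma: "0 < \<gamma>" "\<gamma> < 1"
    and Hbar_nonneg: "0 \<le> Hbar"
    and Hbar: "\<And>s. s \<in> I \<Longrightarrow> (\<integral>\<^sup>+ \<omega>. step_AB A B (smap fst \<omega>) \<partial>Pr s) \<le> ennreal Hbar"
    and rB: "0 < rB" and rAB: "0 < rAB"
    and ratio: "rB / rAB \<ge> 1 / (1 - \<gamma>) * (1 / \<gamma> powr (Hbar + 1) - 1)"
  shows "\<forall>s\<in>I. value_fun Pr \<gamma> (reward rB rAB A B) A B s \<ge> - rAB * (1 - \<gamma> powr Hbar) / (1 - \<gamma>)"
proof -
  interpret mdp M Ma P pol Pr
    by (unfold_locales) (rule P_kernel, rule pol_kernel, rule path)
  show ?thesis
    by (rule main[OF I_meas I_abs A_meas B_meas gamma Hbar_nonneg Hbar rB rAB ratio])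
qed

end
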